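(* Let $s\in\mathbb{C}$ with $\sigma=\operatorname{Re}s>1$, let $\beta\ne0$ be complex and $n_0>1+|\beta|$ an integer. With $\gamma_{k_0}=\big|1+\frac{s-1}{k_0+1}\big|$, let $k_0$ be a positive integer such that $\gamma_{k_0}<\frac{n_0-1}{|\beta|}$. Let $\mathcal{D}_{n_0}\in\{\mathcal{X}_{n_0},\mathcal{Y}_{n_0},\mathcal{Z}_{n_0}\}$. Then $$\Big|\sum_{k\ge k_0}\binom{-s}{k}\beta^k\mathcal{D}_{n_0}(s+k)\Big|\le\frac{2|\beta|^{k_0}(n_0-1)^{3-\sigma-k_0}}{(\sigma+k_0-2)(n_0-1-\gamma_{k_0}|\beta|)}\Big|\binom{-s}{k_0}\Big|.$$
   Context: Pascal's rhombus consists of integers $r_{i,j}$ for $i\ge0$, $j\in\mathbb{Z}$, with $r_{0,j}=0$ for all $j$, $r_{1,0}=1$, $r_{1,j}=0$ for $j\ne0$, and $r_{i,j}=r_{i-1,j-1}+r_{i-1,j}+r_{i-1,j+1}+r_{i-2,j}$ for $i\ge2$. For $n\ge1$: $x(n)$ is the number of $j$ with $r_{n,j}$ odd; $y(n)$ the number of $j$ with $r_{2n-1,2j}$ odd; $z(n)$ the number of $j$ with $r_{2n,2j-1}$ odd. $\mathcal{X}_{n_0}(s)=\sum_{n\ge n_0}x(n)n^{-s}$, $\mathcal{Y}_{n_0}(s)=\sum_{n\ge n_0}y(n)n^{-s}$, $\mathcal{Z}_{n_0}(s)=\sum_{n\ge n_0}z(n)n^{-s}$. *)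

theory Defs
  imports "HOL-Analysis.Analysis"
begin

text \<open>Pascal's rhombus r(i,j), i \<ge> 0, j integer.\<close>
fun rh :: "nat \<Rightarrow> int \<Rightarrow> int" where
  "rh 0 j = 0"
| "rh (Suc 0) j = (if j = 0 then 1 else 0)"
| "rh (Suc (Suc i)) j = rh (Suc i) (j - 1) + rh (Suc i) j + rh (Suc i) (j + 1) + rh i j"

definition rx :: "nat \<Rightarrow> nat" where
  "rx n = card {j::int. odd (rh n j)}"

definition ry :: "nat \<Rightarrow> nat" where
  "ry n = card {j::int. odd (rh (2 * n - 1) (2 * j))}"

definition rz :: "nat \<Rightarrow> nat" where
  "rz n = card {j::int. odd (rh (2 * n) (2 * j - 1))}"

definition dser :: "(nat \<Rightarrow> nat) \<Rightarrow> nat \<Rightarrow> complex \<Rightarrow> complex" where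
  "dser d n0 s = (\<Sum>n. of_nat (d (n + n0)) * (of_nat (n + n0)) powr (- s))"

end

theory Submission imports Defs begin

lemma rh_zero: "int n \<le> \<bar>j\<bar> \<Longrightarrow> rh n j = 0"
  by (induction n j rule: rh.induct) auto

lemma card_sub: assumes "A \<subseteq> {a..b::int}" shows "card A \<le> nat (b - a + 1)"
  using card_mono[OF finite_atLeastAtMost_int assms] by simp

lemma d_bound: assumes "d \<in> {rx, ry, rz}" "n \<ge> 1" shows "d n \<le> 2 * n"
proof -
  have "rx n \<le> 2 * n"
  proof -
    have "{j::int. odd (rh n j)} \<subseteq> {-(int n - 1)..int n - 1}"
    proof
      fix j assume "j \<in> {j::int. odd (rh n j)}"
      hence "\<not> int n \<le> \<bar>j\<bar>" using rh_zero by fastforce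
      thus "j \<in> {-(int n - 1)..int n - 1}" by auto
    qed
    from card_sub[OF this] show ?thesis unfolding rx_def using assms(2) by simp
  qed
  moreover have "ry n \<le> 2 * n"
  proof -
    have "{j::int. odd (rh (2*n-1) (2*j))} \<subseteq> {-(int n - 1)..int n - 1}"
    proof
      fix j assume "j \<in> {j::int. odd (rh (2*n-1) (2*j))}"
      hence "\<not> int (2*n-1) \<le> \<bar>2*j\<bar>" using rh_zero by fastforce
      thus "j \<in> {-(int n - 1)..int n - 1}" using assms(2) by auto
    qed
    from card_sub[OF this] show ?thesis unfolding ry_def using assms(2) by simp
  qed
  moreover have "rz n \<le> 2 * n"
  proof -
    have "{j::int. odd (rh (2*n) (2*j-1))} \<subseteq> {-(int n - 1)..int n}"
    proof
      fix j assume "j \<in> {j::int. odd (rh (2*n) (2*j-1))}"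
      hence "\<not> int (2*n) \<le> \<bar>2*j-1\<bar>" using rh_zero by fastforce
      thus "j \<in> {-(int n - 1)..int n}" using assms(2) by auto
    qed
    from card_sub[OF this] show ?thesis unfolding rz_def using assms(2) by simp
  qed
  ultimately show ?thesis using assms(1) by auto
qed



lemma step_ineq: fixes a x :: real assumes "a > 2" "x \<ge> 2"
  shows "x powr (1-a) \<le> ((x-1) powr (2-a) - x powr (2-a))/(a-2)"
proof -
  have der: "\<And>t. x - 1 \<le> t \<Longrightarrow> t \<le> x \<Longrightarrow> ((\<lambda>t. t powr (2-a)) has_real_derivative ((2-a) * t powr (2-a-1))) (at t)"
    using assms by (intro has_real_derivative_powr) auto
  obtain z where z: "x - 1 < z" "z < x" "x powr (2-a) - (x-1) powr (2-a) = (x - (x-1)) * ((2-a) * z powr (2-a-1))"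
    using MVT2[of "x-1" x "\<lambda>t. t powr (2-a)" "\<lambda>t. (2-a) * t powr (2-a-1)", OF _ der] by auto
  have "x powr (1-a) \<le> z powr (1-a)"
    using z assms by (intro powr_mono2') auto
  moreover have "(x-1) powr (2-a) - x powr (2-a) = (a-2) * z powr (1-a)"
    using z(3) by (simp add: algebra_simps)
  ultimately have "(a-2) * x powr (1-a) \<le> (x-1) powr (2-a) - x powr (2-a)"
    using assms by (metis diff_gt_0_iff_gt mult_left_mono less_imp_le)
  thus ?thesis using assms by (simp add: pos_le_divide_eq mult.commute)
qed

lemma dser_bound:
  fixes z :: complex
  assumes "d \<in> {rx, ry, rz}" "n0 \<ge> 2" "Re z > 2"
  shows "summable (\<lambda>n. of_nat (d (n+n0)) * of_nat(n+n0) powr (-z))"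
    and "norm (dser d n0 z) \<le> 2 * (real n0 - 1) powr (2 - Re z) / (Re z - 2)"
proof -
  define a where "a = Re z"
  define g where "g n = 2 * (real (n+n0) - 1) powr (2-a) / (a-2)" for n
  have a: "a > 2" using assms a_def by simp
  have gl: "g \<longlonglongrightarrow> 0"
  proof -
    have "LIM n sequentially. (real n0 - 1) + real n :> at_top"
      by (rule filterlim_tendsto_add_at_top[OF tendsto_const filterlim_real_sequentially])
    hence "LIM n sequentially. real (n+n0) - 1 :> at_top" by (simp add: algebra_simps)
    hence "(\<lambda>n. (real (n+n0) - 1) powr (2-a)) \<longlonglongrightarrow> 0"
      by (rule tendsto_neg_powr[rotated]) (use a in simp)
    from tendsto_mult[OF tendsto_const[of 2] tendsto_divide[OF this tendsto_const[of "a-2"]]] a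
    show ?thesis unfolding g_def by simp
  qed
  have gs: "(\<lambda>n. g n - g (Suc n)) sums (g 0)"
    using telescope_sums'[OF gl] by simp
  have bnd: "norm (of_nat (d (n+n0)) * of_nat(n+n0) powr (-z)) \<le> g n - g (Suc n)" for n
  proof -
    define m where "m = n + n0"
    have m: "m \<ge> 2" using assms m_def by simp
    have "norm (of_nat (d m) * (of_nat m :: complex) powr (-z)) = real (d m) * real m powr (-a)"
      by (simp add: norm_mult norm_powr_real_powr a_def)
    also have "\<dots> \<le> real (2*m) * real m powr (-a)"
      using d_bound[OF assms(1), of m] m by (intro mult_right_mono) auto
    also have "\<dots> = 2 * real m powr (1-a)"
      using m by (simp add: powr_add[symmetric] powr_diff powr_minus field_simps)
    also have "\<dots> \<le> 2 * (((real m-1) powr (2-a) - real m powr (2-a))/(a-2))"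
      using step_ineq[OF a, of "real m"] m by (intro mult_left_mono) auto
    also have "\<dots> = g n - g (Suc n)"
      unfolding g_def m_def by (simp add: diff_divide_distrib)
    finally show ?thesis unfolding m_def .
  qed
  show sm: "summable (\<lambda>n. of_nat (d (n+n0)) * of_nat(n+n0) powr (-z))"
    by (rule summable_norm_cancel, rule summable_comparison_test[OF _ sums_summable[OF gs]])
       (use bnd in auto)
  have "norm (dser d n0 z) \<le> (\<Sum>n. norm (of_nat (d (n+n0)) * of_nat(n+n0) powr (-z)))"
    unfolding dser_def
    by (rule summable_norm, rule summable_comparison_test[OF _ sums_summable[OF gs]])
       (use bnd in auto)
  also have "\<dots> \<le> (\<Sum>n. g n - g (Suc n))"
    by (rule suminf_le[OF bnd _ sums_summable[OF gs]])
       (rule summable_comparison_test[OF _ sums_summable[OF gs]], use bnd in auto)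
  also have "\<dots> = g 0" using gs sums_unique by metis
  finally show "norm (dser d n0 z) \<le> 2 * (real n0 - 1) powr (2 - Re z) / (Re z - 2)"
    unfolding g_def a_def by simp
qed


lemma gam_mono:
  fixes s :: complex
  assumes "Re s > 1" "k0 \<le> m"
  shows "norm (1 + (s-1)/of_nat (m+1)) \<le> norm (1 + (s-1)/of_nat (k0+1))"
proof -
  have e: "norm (1 + (s-1)/of_nat (j+1)) = sqrt ((1 + (Re s - 1)/(real j+1))^2 + (Im s/(real j+1))^2)" for j
  proof -
    have "1 + (s-1)/of_nat (j+1) = Complex (1 + (Re s - 1)/(real j+1)) (Im s/(real j+1))"
      by (simp add: complex_eq_iff)
    thus ?thesis by (simp add: cmod_def)
  qed
  have h1: "0 \<le> 1 + (Re s - 1)/(real m+1)" using assms by simp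
  have h2: "1 + (Re s - 1)/(real m+1) \<le> 1 + (Re s - 1)/(real k0+1)"
    using assms by (intro add_left_mono divide_left_mono) auto
  have h3: "(Im s/(real m+1))^2 \<le> (Im s/(real k0+1))^2"
    using assms by (simp add: power_divide divide_left_mono)
  show ?thesis unfolding e
    by (intro real_sqrt_le_mono add_mono power_mono h1 h2 h3)
qed

lemma binom_step:
  fixes a :: complex
  shows "a gchoose (Suc m) = (a gchoose m) * ((a - of_nat m) / of_nat (Suc m))"
proof -
  have "of_nat (Suc m) * (a gchoose (Suc m)) = (a - of_nat m) * (a gchoose m)"
    using gbinomial_mult_1[of a m] by (simp add: algebra_simps)
  thus ?thesis by (simp add: field_simps del: of_nat_Suc)
qed

lemma binom_bound:
  fixes s :: complex
  assumes "Re s > 1"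
  shows "norm ((- s) gchoose (k + k0)) \<le> norm ((- s) gchoose k0) * norm (1 + (s-1)/of_nat (k0+1)) ^ k"
proof (induction k)
  case 0 thus ?case by simp
next
  case (Suc k)
  define m where "m = k + k0"
  have eq: "(- s - of_nat m) / of_nat (Suc m) = - (1 + (s-1)/of_nat (m+1))"
    by (simp add: field_simps del: of_nat_Suc) (simp add: algebra_simps)
  have "norm ((- s) gchoose (Suc k + k0)) = norm ((- s) gchoose m) * norm (1 + (s-1)/of_nat (m+1))"
  proof -
    have "(- s) gchoose (Suc k + k0) = ((- s) gchoose m) * ((- s - of_nat m) / of_nat (Suc m))"
      using binom_step[of "- s" m] unfolding m_def by simp
    also have "\<dots> = - (((- s) gchoose m) * (1 + (s-1)/of_nat (m+1)))"
      by (subst eq) (simp add: algebra_simps)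
    finally show ?thesis by (simp only: norm_minus_cancel norm_mult)
  qed
  also have "\<dots> \<le> (norm ((- s) gchoose k0) * norm (1 + (s-1)/of_nat (k0+1)) ^ k) * norm (1 + (s-1)/of_nat (k0+1))"
    using Suc gam_mono[OF assms, of k0 m] unfolding m_def
    by (intro mult_mono) auto
  finally show ?case by (simp add: algebra_simps)
qed


theorem lemmaI4:
  fixes s \<beta> :: complex and n0 k0 :: nat and d :: "nat \<Rightarrow> nat"
  assumes "Re s > 1"
    and "\<beta> \<noteq> 0"
    and "real n0 > 1 + norm \<beta>"
    and "k0 > 0"
    and "norm (1 + (s - 1) / of_nat (k0 + 1)) < (real n0 - 1) / norm \<beta>"
    and "d \<in> {rx, ry, rz}"
  shows "summable (\<lambda>k. ((- s) gchoose (k + k0)) * \<beta> ^ (k + k0) * dser d n0 (s + of_nat (k + k0)))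
    \<and> norm (\<Sum>k. ((- s) gchoose (k + k0)) * \<beta> ^ (k + k0) * dser d n0 (s + of_nat (k + k0)))
      \<le> 2 * norm \<beta> ^ k0 * (real n0 - 1) powr (3 - Re s - real k0)
         / ((Re s + real k0 - 2) * (real n0 - 1 - norm (1 + (s - 1) / of_nat (k0 + 1)) * norm \<beta>))
         * norm ((- s) gchoose k0)"
proof -
  define N where "N = real n0 - 1"
  define \<gamma> where "\<gamma> = norm (1 + (s - 1) / of_nat (k0 + 1))"
  define b where "b = norm ((- s) gchoose k0)"
  define B where "B = norm \<beta>"
  define \<sigma> where "\<sigma> = Re s"
  define q where "q = \<gamma> * B / N"
  define C where "C = 2 * b * B ^ k0 * N powr (2 - \<sigma> - real k0) / (\<sigma> + real k0 - 2)"
  define t where "t k = ((- s) gchoose (k + k0)) * \<beta> ^ (k + k0) * dser d n0 (s + of_nat (k + k0))" for k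
  have B: "B > 0" using assms(2) B_def by simp
  have N: "N > B" using assms(3) N_def B_def by simp
  have "real n0 > 1" using assms(3) norm_ge_zero[of \<beta>] by linarith
  hence n0: "n0 \<ge> 2" by simp
  have sig: "\<sigma> + real k0 - 2 > 0" using assms(1,4) \<sigma>_def by simp
  have g0: "\<gamma> \<ge> 0" unfolding \<gamma>_def by simp
  have gB: "\<gamma> * B < N" using assms(5) B N unfolding \<gamma>_def B_def N_def by (simp add: pos_less_divide_eq)
  have q0: "q \<ge> 0" "q < 1" using g0 B N gB unfolding q_def by auto
  have C0: "C \<ge> 0" using sig N B unfolding C_def b_def by simp
  have tb: "norm (t k) \<le> C * q ^ k" for k
  proof -
    have Dz: "norm (dser d n0 (s + of_nat (k + k0))) \<le> 2 * N powr (2 - \<sigma> - real (k + k0)) / (\<sigma> + real (k + k0) - 2)"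
      using dser_bound(2)[OF assms(6) n0, of "s + of_nat (k + k0)"] assms(1,4)
      unfolding N_def \<sigma>_def by (simp add: algebra_simps)
    have Npow: "N powr (2 - \<sigma> - real (k + k0)) = N powr (2 - \<sigma> - real k0) / N ^ k"
    proof -
      have "N powr (2 - \<sigma> - real (k + k0)) = N powr ((2 - \<sigma> - real k0) - real k)"
        by (simp add: algebra_simps)
      also have "\<dots> = N powr (2 - \<sigma> - real k0) / N powr real k" by (rule powr_diff)
      also have "N powr real k = N ^ k" using N B by (simp add: powr_realpow)
      finally show ?thesis .
    qed
    have "2 * N powr (2 - \<sigma> - real (k + k0)) / (\<sigma> + real (k + k0) - 2)
        \<le> 2 * N powr (2 - \<sigma> - real (k + k0)) / (\<sigma> + real k0 - 2)"
      using sig by (intro divide_left_mono) auto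
    with Dz have D: "norm (dser d n0 (s + of_nat (k + k0))) \<le> 2 * (N powr (2 - \<sigma> - real k0) / N ^ k) / (\<sigma> + real k0 - 2)"
      unfolding Npow by linarith
    have "norm (t k) = norm ((- s) gchoose (k + k0)) * B ^ (k + k0) * norm (dser d n0 (s + of_nat (k + k0)))"
      unfolding t_def B_def by (simp add: norm_mult norm_power)
    also have "\<dots> \<le> (b * \<gamma> ^ k) * B ^ (k + k0) * (2 * (N powr (2 - \<sigma> - real k0) / N ^ k) / (\<sigma> + real k0 - 2))"
      using binom_bound[OF assms(1), of k k0] D B
      unfolding b_def \<gamma>_def by (intro mult_mono) auto
    also have "\<dots> = C * q ^ k"
      unfolding C_def q_def using N B sig by (simp add: power_add power_divide field_simps power_mult_distrib)
    finally show ?thesis .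
  qed
  have gs: "summable (\<lambda>k. C * q ^ k)" using q0 by (intro summable_mult summable_geometric) auto
  have sm: "summable t"
    by (rule summable_comparison_test[OF _ gs]) (use tb in auto)
  have "norm (suminf t) \<le> (\<Sum>k. norm (t k))"
    by (rule summable_norm, rule summable_comparison_test[OF _ gs]) (use tb in auto)
  also have "\<dots> \<le> (\<Sum>k. C * q ^ k)"
    by (rule suminf_le[OF tb _ gs]) (rule summable_comparison_test[OF _ gs], use tb in auto)
  also have "\<dots> = C / (1 - q)"
    using q0 by (simp add: suminf_mult suminf_geometric divide_inverse)
  also have "\<dots> = 2 * B ^ k0 * N powr (3 - \<sigma> - real k0) / ((\<sigma> + real k0 - 2) * (N - \<gamma> * B)) * b"
  proof -
    have "N powr (3 - \<sigma> - real k0) = N powr (2 - \<sigma> - real k0) * N"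
    proof -
      have "N powr (3 - \<sigma> - real k0) = N powr ((2 - \<sigma> - real k0) + 1)" by (simp add: algebra_simps)
      also have "\<dots> = N powr (2 - \<sigma> - real k0) * N powr 1" by (rule powr_add)
      finally show ?thesis using N B by simp
    qed
    thus ?thesis unfolding C_def q_def using N B sig gB by (simp add: field_simps)
  qed
  finally show ?thesis using sm unfolding t_def N_def \<gamma>_def b_def B_def \<sigma>_def by simp
qed

end
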